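(* In the setting of the context: (i) If $\omega\notin i\mathbb{R}$ and $|\omega_\Im|$ is large enough, then $\omega\notin W_\Omega(T)$. (ii) For sequences $\{\omega^n\}\subset W_\Omega(T)$ with $|\omega^n_\Re|\to\infty$ as $n\to\infty$, it holds that $\hat\beta(\omega^n)\sim-2\omega^n_\Im(\omega^n_\Re)^2/d$ and $\omega^n_\Im=O((\omega^n_\Re)^{-2})$. (iii) If $\omega\notin i\mathbb{R}\cup\partial\mathcal{D}$, then $\hat\beta(\omega)\ge0$ if and only if $\omega\in\Pi_\beta$. (iv) If $\omega\notin i\mathbb{R}\cup\partial\mathcal{D}$, then $\hat\alpha(\omega)\ge0$ if and only if $\omega\in\Pi_\alpha$.
   Context: Let $\mathcal{H}$ be a Hilbert space, $A$ a selfadjoint (possibly unbounded) operator in $\mathcal{H}$ and $B$ a nonzero bounded selfadjoint operator. Let $c\ge0$, $d>0$, $\delta_\pm:=\pm\sqrt{c-d^2/4}-id/2$ (principal square root). $W(A),W(B)\subset\mathbb{R}$ are the numerical ranges. For real $\alpha,\beta$ let $p_{(\alpha,\beta)}(\omega):=(\alpha-\omega^2)(c-id\omega-\omega^2)-\beta\omega^2$ with roots $r_1,\dots,r_4$ labelled continuously in $(\alpha,\beta)$ and extended by limits to $\overline{\mathbb{R}}\times\mathbb{R}$ ($\overline{\mathbb{R}}=\mathbb{R}\cup\{\pm\infty\}$), values in $\overline{\mathbb{C}}$. Let $\Omega:=\overline{W(A)}\times\overline{W(B)}$ (closure of $W(A)$ in $\overline{\mathbb{R}}$) and $W_\Omega(T):=\bigcup_{n=1}^4\bigcup_{(\alpha,\beta)\in\Omega}r_n(\alpha,\beta)$.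 Let $\mathcal{D}:=\{\omega:|\omega+ic/d|<c/d\}$. Write $\omega=\omega_\Re+i\omega_\Im$ and define $\hat\beta(\omega):=\frac{-2\omega_\Im\left((-\omega_\Re^2+\omega_\Im^2+d\omega_\Im+c)^2+\omega_\Re^2(2\omega_\Im+d)^2\right)}{d|\omega|^2+2c\omega_\Im}$, $\hat\alpha(\omega):=\frac{(2\omega_\Im+d)|\omega|^4}{d|\omega|^2+2c\omega_\Im}$ (defined for $\omega\notin\partial\mathcal{D}$). Let $\Pi_\beta:=\{\omega\in\mathbb{C}\setminus\overline{\mathcal{D}}:\omega_\Im\le0\}$ and $\Pi_\alpha:=\{\omega\in\mathbb{C}\setminus\overline{\mathcal{D}}:\omega_\Im\ge-d/2\}\cup\{\omega\in\mathcal{D}:\omega_\Im\le-d/2\}$. *)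

theory Defs
  imports "HOL-Analysis.Analysis" "HOL-Library.Landau_Symbols"
begin

definition pol :: "real \<Rightarrow> real \<Rightarrow> real \<Rightarrow> real \<Rightarrow> complex \<Rightarrow> complex" where
  "pol c d \<alpha> \<beta> \<omega> =
     (complex_of_real \<alpha> - \<omega>^2) * (complex_of_real c - \<i> * complex_of_real d * \<omega> - \<omega>^2)
     - complex_of_real \<beta> * \<omega>^2"

text \<open>For alpha = +-infinity the roots are defined as limits of the continuously labelled
  roots as alpha tends to +-infinity; the finite such limit values are exactly the
  complex numbers that are limits of sequences of roots of p_(a_k,beta) with a_k tending
  to alpha (the value infinity of the extended complex plane is not a complex number
  and is therefore not included).\<close>
definition ext_roots :: "real \<Rightarrow> real \<Rightarrow> ereal \<Rightarrow> real \<Rightarrow> complex set" where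
  "ext_roots c d \<alpha> \<beta> =
     (if \<bar>\<alpha>\<bar> \<noteq> \<infinity> then {\<omega>. pol c d (real_of_ereal \<alpha>) \<beta> \<omega> = 0}
      else {\<omega>. \<exists>(a :: nat \<Rightarrow> real) (w :: nat \<Rightarrow> complex).
                 ((\<lambda>k. ereal (a k)) \<longlongrightarrow> \<alpha>) sequentially \<and>
                 (\<forall>k. pol c d (a k) \<beta> (w k) = 0) \<and> (w \<longlonglongrightarrow> \<omega>)})"

definition W_Omega :: "real \<Rightarrow> real \<Rightarrow> (ereal \<times> real) set \<Rightarrow> complex set" where
  "W_Omega c d \<Omega> = (\<Union>(\<alpha>, \<beta>) \<in> \<Omega>. ext_roots c d \<alpha> \<beta>)"

definition Omega :: "real set \<Rightarrow> real set \<Rightarrow> (ereal \<times> real) set" where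
  "Omega WA WB = closure (ereal ` WA) \<times> closure WB"

definition diskD :: "real \<Rightarrow> real \<Rightarrow> complex set" where
  "diskD c d = ball (- \<i> * complex_of_real (c / d)) (c / d)"

text \<open>The boundary circle |w + i c/d| = c/d (the zero set of the denominators).\<close>
definition circD :: "real \<Rightarrow> real \<Rightarrow> complex set" where
  "circD c d = sphere (- \<i> * complex_of_real (c / d)) (c / d)"

definition beta_hat :: "real \<Rightarrow> real \<Rightarrow> complex \<Rightarrow> real" where
  "beta_hat c d \<omega> =
     (- 2 * Im \<omega> * ((- ((Re \<omega>)^2) + (Im \<omega>)^2 + d * Im \<omega> + c)^2
                     + (Re \<omega>)^2 * (2 * Im \<omega> + d)^2))
     / (d * (cmod \<omega>)^2 + 2 * c * Im \<omega>)"

definition alpha_hat :: "real \<Rightarrow> real \<Rightarrow> complex \<Rightarrow> real" where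
  "alpha_hat c d \<omega> = ((2 * Im \<omega> + d) * (cmod \<omega>)^4) / (d * (cmod \<omega>)^2 + 2 * c * Im \<omega>)"

definition Pi_beta :: "real \<Rightarrow> real \<Rightarrow> complex set" where
  "Pi_beta c d = {\<omega>. \<omega> \<notin> closure (diskD c d) \<and> Im \<omega> \<le> 0}"

definition Pi_alpha :: "real \<Rightarrow> real \<Rightarrow> complex set" where
  "Pi_alpha c d = {\<omega>. \<omega> \<notin> closure (diskD c d) \<and> Im \<omega> \<ge> - d / 2}
                 \<union> {\<omega>. \<omega> \<in> diskD c d \<and> Im \<omega> \<le> - d / 2}"

end

theory Submission
  imports Defs
begin


lemma pol_parts:
  "pol c d a b (Complex x y) =
    Complex ((a - x^2+y^2)*(c+d*y-x^2+y^2) - 2*x^2*y*(d+2*y) - b*(x^2-y^2))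
            (- x * ((a-x^2+y^2)*(d+2*y) + 2*y*(c+d*y-x^2+y^2+b)))"
  by (simp add: pol_def complex_eq_iff power2_eq_square algebra_simps)

lemma pol_beta:
  assumes "pol c d a b w = 0" "Re w \<noteq> 0"
  shows "b * (d*((Re w)^2+(Im w)^2) + 2*c*Im w) = -2*Im w*((- ((Re w)^2) + (Im w)^2 + d*Im w + c)^2 + (Re w)^2*(2*Im w+d)^2)"
proof -
  obtain x y where w: "w = Complex x y" by (metis complex.collapse)
  have x: "x \<noteq> 0" using assms w by simp
  let ?E1 = "(a - x^2+y^2)*(c+d*y-x^2+y^2) - 2*x^2*y*(d+2*y) - b*(x^2-y^2)"
  let ?E2 = "(a-x^2+y^2)*(d+2*y) + 2*y*(c+d*y-x^2+y^2+b)"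
  have h: "?E1 = 0 \<and> - x * ?E2 = 0" using assms(1) unfolding w pol_parts complex_eq_iff by simp
  hence e1: "?E1 = 0" and e2: "?E2 = 0" using x by auto
  have "b * (d*(x^2+y^2) + 2*c*y) + 2*y*((- (x^2) + y^2 + d*y + c)^2 + x^2*(2*y+d)^2)
        = (c+d*y-x^2+y^2) * ?E2 - (d+2*y) * ?E1" by algebra
  thus ?thesis using e1 e2 w by simp
qed



lemma sq_less_iff: "(a::real) \<ge> 0 \<Longrightarrow> r \<ge> 0 \<Longrightarrow> a < r \<longleftrightarrow> a^2 < r^2"
  by (meson pos2 power_less_imp_less_base power_strict_mono)

lemma sq_eq_iff: "(a::real) \<ge> 0 \<Longrightarrow> r \<ge> 0 \<Longrightarrow> a = r \<longleftrightarrow> a^2 = r^2"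
  by (simp add: power2_eq_iff_nonneg)

lemma disk_norm:
  "(cmod (- \<i> * complex_of_real r - w))^2 = (Re w)^2 + (Im w)^2 + 2*r*Im w + r^2"
  unfolding cmod_power2 by (simp add: power2_eq_square algebra_simps)

lemma circD_iff:
  assumes "c \<ge> 0" "d > 0"
  shows "w \<in> circD c d \<longleftrightarrow> d*((Re w)^2+(Im w)^2) + 2*c*Im w = 0"
proof -
  have r: "c/d \<ge> 0" using assms by simp
  have "w \<in> circD c d \<longleftrightarrow> (Re w)^2 + (Im w)^2 + 2*(c/d)*Im w + (c/d)^2 = (c/d)^2"
    unfolding circD_def mem_sphere dist_norm using sq_eq_iff[OF norm_ge_zero r] disk_norm by metis
  also have "\<dots> \<longleftrightarrow> d*((Re w)^2 + (Im w)^2 + 2*(c/d)*Im w) = 0" using assms by simp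
  also have "d*((Re w)^2 + (Im w)^2 + 2*(c/d)*Im w) = d*((Re w)^2+(Im w)^2) + 2*c*Im w"
    using assms by (simp add: field_simps)
  finally show ?thesis .
qed

lemma diskD_iff:
  assumes "c \<ge> 0" "d > 0"
  shows "w \<in> diskD c d \<longleftrightarrow> d*((Re w)^2+(Im w)^2) + 2*c*Im w < 0"
proof -
  have r: "c/d \<ge> 0" using assms by simp
  have "w \<in> diskD c d \<longleftrightarrow> (Re w)^2 + (Im w)^2 + 2*(c/d)*Im w + (c/d)^2 < (c/d)^2"
    unfolding diskD_def mem_ball dist_norm using sq_less_iff[OF norm_ge_zero r] disk_norm by metis
  also have "\<dots> \<longleftrightarrow> d*((Re w)^2 + (Im w)^2 + 2*(c/d)*Im w) < 0" using assms
    by (simp add: mult_less_0_iff)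
  also have "d*((Re w)^2 + (Im w)^2 + 2*(c/d)*Im w) = d*((Re w)^2+(Im w)^2) + 2*c*Im w"
    using assms by (simp add: field_simps)
  finally show ?thesis .
qed

lemma closure_diskD:
  assumes "c \<ge> 0" "d > 0" "w \<notin> circD c d"
  shows "w \<in> closure (diskD c d) \<longleftrightarrow> w \<in> diskD c d"
proof -
  have "closure (diskD c d) \<subseteq> cball (- \<i> * complex_of_real (c / d)) (c / d)"
    unfolding diskD_def by (intro closure_minimal ball_subset_cball closed_cball)
  moreover have "cball (- \<i> * complex_of_real (c / d)) (c / d) = diskD c d \<union> circD c d"
    unfolding diskD_def circD_def by auto
  ultimately show ?thesis using assms closure_subset by blast
qed



lemma N_pos:
  assumes "Re w \<noteq> 0" "d*((Re w)^2+(Im w)^2) + 2*c*Im w \<noteq> 0"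
  shows "(- ((Re w)^2) + (Im w)^2 + d * Im w + c)^2 + (Re w)^2 * (2 * Im w + d)^2 > 0"
proof -
  define x y where "x = Re w" "y = Im w"
  have x: "x \<noteq> 0" using assms x_y_def by simp
  have D: "d*(x^2+y^2) + 2*c*y \<noteq> 0" using assms x_y_def by simp
  have "(- (x^2) + y^2 + d * y + c)^2 + x^2 * (2 * y + d)^2 \<noteq> 0"
  proof
    assume h: "(- (x^2) + y^2 + d * y + c)^2 + x^2 * (2 * y + d)^2 = 0"
    have "(- (x^2) + y^2 + d * y + c)^2 \<ge> 0" "x^2 * (2 * y + d)^2 \<ge> 0" by simp_all
    hence "(- (x^2) + y^2 + d * y + c)^2 = 0" and x2: "x^2 * (2 * y + d)^2 = 0" using h
      by (simp_all add: add_nonneg_eq_0_iff)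
    hence q1: "- (x^2) + y^2 + d * y + c = 0" by simp
    have q2: "2*y+d = 0" using x x2 by simp
    have "d*(x^2+y^2) + 2*c*y = (2*y+d)*(d*y+c) - d*(- (x^2) + y^2 + d * y + c)" by algebra
    thus False using q1 q2 D by simp
  qed
  moreover have "(- (x^2) + y^2 + d * y + c)^2 + x^2 * (2 * y + d)^2 \<ge> 0" by simp
  ultimately have "(- (x^2) + y^2 + d * y + c)^2 + x^2 * (2 * y + d)^2 > 0" by linarith
  thus ?thesis unfolding x_y_def .
qed

lemma pos_fac: "(k::real) > 0 \<Longrightarrow> 0 \<le> a*k \<longleftrightarrow> 0 \<le> a" by (simp add: zero_le_mult_iff)
lemma neg_fac: "(k::real) < 0 \<Longrightarrow> 0 \<le> a*k \<longleftrightarrow> a \<le> 0" by (simp add: zero_le_mult_iff)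

lemma part3:
  assumes c: "c \<ge> 0" and d: "d > 0" and w: "Re w \<noteq> 0" "w \<notin> circD c d"
  shows "beta_hat c d w \<ge> 0 \<longleftrightarrow> w \<in> Pi_beta c d"
proof -
  define D where "D = d*((Re w)^2+(Im w)^2) + 2*c*Im w"
  define N where "N = (- ((Re w)^2) + (Im w)^2 + d * Im w + c)^2 + (Re w)^2 * (2 * Im w + d)^2"
  have D0: "D \<noteq> 0" using circD_iff[OF c d] w D_def by simp
  have N: "N > 0" using N_pos[OF w(1)] D0 D_def N_def by simp
  have bh: "beta_hat c d w = (-2 * Im w) * N / D"
    unfolding beta_hat_def N_def D_def cmod_power2 by simp
  have Pi: "w \<in> Pi_beta c d \<longleftrightarrow> D > 0 \<and> Im w \<le> 0"
    unfolding Pi_beta_def using closure_diskD[OF c d w(2)] diskD_iff[OF c d] D0 D_def by auto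
  have neg: "D < 0 \<Longrightarrow> Im w < 0"
  proof -
    assume "D < 0"
    moreover have "d*((Re w)^2+(Im w)^2) \<ge> 0" using d by simp
    ultimately have "c * Im w < 0" using D_def by simp
    thus "Im w < 0" using c by (simp add: mult_less_0_iff)
  qed
  show ?thesis
  proof (cases "D > 0")
    case True
    have p: "N / D > 0" using True N by simp
    have eq: "beta_hat c d w = (-2 * Im w) * (N / D)" unfolding bh by simp
    show ?thesis unfolding eq Pi pos_fac[OF p] using True by auto
  next
    case False
    hence "D < 0" using D0 by simp
    have p: "N / D < 0" using \<open>D < 0\<close> N by (simp add: divide_less_0_iff)
    have eq: "beta_hat c d w = (-2 * Im w) * (N / D)" unfolding bh by simp
    show ?thesis unfolding eq Pi neg_fac[OF p] using \<open>D < 0\<close> neg by auto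
  qed
qed

lemma part4:
  assumes c: "c \<ge> 0" and d: "d > 0" and w: "Re w \<noteq> 0" "w \<notin> circD c d"
  shows "alpha_hat c d w \<ge> 0 \<longleftrightarrow> w \<in> Pi_alpha c d"
proof -
  define D where "D = d*((Re w)^2+(Im w)^2) + 2*c*Im w"
  have D0: "D \<noteq> 0" using circD_iff[OF c d] w D_def by simp
  have M: "cmod w ^ 4 > 0" using w(1) by auto
  have ah: "alpha_hat c d w = (2 * Im w + d) * cmod w ^ 4 / D"
    unfolding alpha_hat_def D_def cmod_power2 by simp
  have Pi: "w \<in> Pi_alpha c d \<longleftrightarrow> (D > 0 \<and> Im w \<ge> - d/2) \<or> (D < 0 \<and> Im w \<le> -d/2)"
    unfolding Pi_alpha_def using closure_diskD[OF c d w(2)] diskD_iff[OF c d] D0 D_def by auto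
  have e: "Im w \<ge> -d/2 \<longleftrightarrow> 2 * Im w + d \<ge> 0" "Im w \<le> -d/2 \<longleftrightarrow> 2 * Im w + d \<le> 0" by auto
  have ah2: "alpha_hat c d w = (2 * Im w + d) * (cmod w ^ 4 / D)" unfolding ah by simp
  show ?thesis
  proof (cases "D > 0")
    case True
    have p: "cmod w ^ 4 / D > 0" using True M by simp
    show ?thesis unfolding ah2 Pi e pos_fac[OF p] using True by auto
  next
    case False
    hence "D < 0" using D0 by simp
    have p: "cmod w ^ 4 / D < 0" using \<open>D < 0\<close> M by (simp add: divide_less_0_iff)
    show ?thesis unfolding ah2 Pi e neg_fac[OF p] using \<open>D < 0\<close> by auto
  qed
qed



definition qq :: "real \<Rightarrow> real \<Rightarrow> complex \<Rightarrow> complex" where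
  "qq c d w = complex_of_real c - \<i> * complex_of_real d * w - w^2"

lemma qq_Re: "Re (qq c d w) = c + d * Im w - (Re w)^2 + (Im w)^2"
  unfolding qq_def by (simp add: power2_eq_square)
lemma qq_Im: "Im (qq c d w) = - d * Re w - 2 * Re w * Im w"
  unfolding qq_def by (simp add: power2_eq_square)

lemma N_cmod: "(- ((Re w)^2) + (Im w)^2 + d * Im w + c)^2 + (Re w)^2 * (2 * Im w + d)^2
   = (cmod (qq c d w))^2"
proof -
  have "(cmod (qq c d w))^2 = (c + d * Im w - (Re w)^2 + (Im w)^2)^2 + (- d * Re w - 2 * Re w * Im w)^2"
    by (simp only: cmod_power2 qq_Re qq_Im)
  thus ?thesis by (simp add: power2_eq_square algebra_simps)
qed

lemma qq_lower:
  assumes "c \<ge> 0" "d > 0"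
  shows "cmod (qq c d w) \<ge> (cmod w)^2 - d * cmod w - c"
proof -
  have e: "w^2 = (complex_of_real c - \<i> * complex_of_real d * w) - qq c d w" unfolding qq_def by simp
  have "cmod (w^2) \<le> cmod (complex_of_real c - \<i> * complex_of_real d * w) + cmod (qq c d w)"
    unfolding e by (rule norm_triangle_ineq4)
  also have "cmod (complex_of_real c - \<i> * complex_of_real d * w) \<le> cmod (complex_of_real c) + cmod (\<i> * complex_of_real d * w)"
    by (rule norm_triangle_ineq4)
  finally show ?thesis using assms by (simp add: norm_mult norm_power)
qed




lemma big_bound:
  assumes c: "c \<ge> 0" and d: "d > 0" and r: "cmod w \<ge> 2*d + 2*c + 1 + 2*c/d"
  shows "d*((Re w)^2+(Im w)^2) + 2*c*Im w > 0"
    and "\<bar>beta_hat c d w\<bar> \<ge> \<bar>Im w\<bar> * (cmod w)^2 / (2*(d+2*c))"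
proof -
  define R where "R = cmod w"
  define D where "D = d*((Re w)^2+(Im w)^2) + 2*c*Im w"
  define N where "N = (- ((Re w)^2) + (Im w)^2 + d * Im w + c)^2 + (Re w)^2 * (2 * Im w + d)^2"
  have D': "D = d*R^2 + 2*c*Im w" unfolding D_def R_def cmod_power2 ..
  have R1: "R \<ge> 1" and R2: "R \<ge> 2*d+2*c" and R3: "R > 2*c/d"
  proof -
    obtain t where t: "t = 2*c/d" by simp
    have a: "t \<ge> 0" using c d t by simp
    have b: "R \<ge> 2*d + 2*c + 1 + t" using r R_def t by simp
    show "R \<ge> 1" using a b c d by linarith
    show "R \<ge> 2*d+2*c" using a b c d by linarith
    show "R > 2*c/d" using a b c d t by linarith
  qed
  have Iy: "\<bar>Im w\<bar> \<le> R" unfolding R_def by (rule abs_Im_le_cmod)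
  have "c * \<bar>Im w\<bar> \<le> c * R" using Iy c by (simp add: mult_left_mono)
  hence cy: "\<bar>2*c*Im w\<bar> \<le> 2*c*R" using c by (simp add: abs_mult)
  have "d * R > 2*c" using R3 d by (simp add: field_simps)
  hence "d*R*R > 2*c*R" using R1 by (simp add: mult_strict_right_mono)
  hence Dpos: "D > 0" unfolding D' using cy by (simp add: power2_eq_square)
  thus "d*((Re w)^2+(Im w)^2) + 2*c*Im w > 0" unfolding D_def .
  have Dup: "D \<le> (d+2*c)*R^2"
  proof -
    have "2*c*R \<le> 2*c*R^2" using R1 c by (simp add: power2_eq_square mult_left_mono)
    thus ?thesis unfolding D' using cy by (simp add: algebra_simps)
  qed
  have "d*R + c \<le> (d+c)*R" using mult_left_mono[OF R1 c] by (simp add: algebra_simps)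
  also have "\<dots> \<le> R^2/2" using R2 R1 by (simp add: power2_eq_square mult_right_mono)
  finally have "cmod (qq c d w) \<ge> R^2/2" using qq_lower[OF c d, of w] R_def by simp
  hence "(cmod (qq c d w))^2 \<ge> (R^2/2)^2" using R1
    by (metis power_mono zero_le_divide_iff zero_le_numeral zero_le_power2)
  hence Nlow: "N \<ge> R^4/4" unfolding N_def N_cmod by (simp add: power2_eq_square power4_eq_xxxx)
  have bh: "\<bar>beta_hat c d w\<bar> = 2*\<bar>Im w\<bar> * N / D"
    unfolding beta_hat_def N_def D_def cmod_power2 using Dpos D_def
    by (simp add: abs_mult abs_divide)
  have dc: "d + 2*c > 0" using c d by simp
  have "R > 0" using R1 by simp
  have "\<bar>Im w\<bar> * R^2 / (2*(d+2*c)) = 2*\<bar>Im w\<bar> * (R^4/4) / ((d+2*c)*R^2)"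
  proof (subst frac_eq_eq)
    show "2*(d+2*c) \<noteq> 0" using dc by simp
    show "(d+2*c)*R^2 \<noteq> 0" using dc \<open>R > 0\<close> by simp
    show "\<bar>Im w\<bar> * R^2 * ((d+2*c)*R^2) = 2*\<bar>Im w\<bar> * (R^4/4) * (2*(d+2*c))"
      by (simp add: power4_eq_xxxx power2_eq_square algebra_simps)
  qed
  also have "\<dots> \<le> 2*\<bar>Im w\<bar> * N / D"
  proof (rule frac_le)
    show "0 \<le> 2*\<bar>Im w\<bar> * N" using Nlow R1 by (simp add: order_trans[OF _ Nlow])
    show "2*\<bar>Im w\<bar> * (R^4/4) \<le> 2*\<bar>Im w\<bar> * N" by (rule mult_left_mono[OF Nlow]) simp
    show "0 < D" by fact
    show "D \<le> (d+2*c)*R^2" by fact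
  qed
  finally show "\<bar>beta_hat c d w\<bar> \<ge> \<bar>Im w\<bar> * (cmod w)^2 / (2*(d+2*c))" unfolding bh R_def .
qed



lemma abs_at_top:
  assumes "\<bar>\<alpha>\<bar> = (\<infinity>::ereal)" "((\<lambda>k. ereal (a k)) \<longlongrightarrow> \<alpha>) sequentially"
  shows "filterlim (\<lambda>k. \<bar>a k\<bar>) at_top sequentially"
proof -
  have "\<alpha> = \<infinity> \<or> \<alpha> = -\<infinity>" using assms(1) by (cases \<alpha>) auto
  thus ?thesis
  proof
    assume "\<alpha> = \<infinity>"
    hence "\<forall>r. eventually (\<lambda>k. ereal r < ereal (a k)) sequentially" using assms(2) tendsto_PInfty by metis
    hence h: "\<forall>r. eventually (\<lambda>k. r < a k) sequentially" by simp
    have "\<forall>r. eventually (\<lambda>k. r < \<bar>a k\<bar>) sequentially"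
    proof
      fix r show "eventually (\<lambda>k. r < \<bar>a k\<bar>) sequentially"
        using h[rule_format, of r] by (rule eventually_mono) auto
    qed
    thus ?thesis by (simp add: filterlim_at_top_dense)
  next
    assume "\<alpha> = -\<infinity>"
    hence "\<forall>r. eventually (\<lambda>k. ereal (a k) < ereal r) sequentially" using assms(2) tendsto_MInfty by metis
    hence h: "\<forall>r. eventually (\<lambda>k. a k < r) sequentially" by simp
    have "\<forall>r. eventually (\<lambda>k. r < \<bar>a k\<bar>) sequentially"
    proof
      fix r show "eventually (\<lambda>k. r < \<bar>a k\<bar>) sequentially"
        using h[rule_format, of "-r"] by (rule eventually_mono) auto
    qed
    thus ?thesis by (simp add: filterlim_at_top_dense)
  qed
qed

lemma qq_zero_bound:
  assumes c: "c \<ge> 0" and d: "d > 0" and q: "qq c d w = 0"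
  shows "cmod w \<le> c + d + 1"
proof (rule ccontr)
  define r where "r = cmod w"
  assume "\<not> cmod w \<le> c + d + 1"
  hence r1: "r > c + d + 1" using r_def by simp
  have "r^2 - d*r - c \<le> 0" using qq_lower[OF c d, of w] q r_def by simp
  moreover have "r*r > (c+d+1)*r" using r1 c d by (simp add: mult_strict_right_mono)
  moreover have "1 \<le> r" using r1 c d by linarith
  hence "c*r \<ge> c" using c mult_left_mono[of 1 r c] by simp
  ultimately show False using r1 c d by (simp add: power2_eq_square algebra_simps)
qed

lemma inf_root_bound:
  assumes c: "c \<ge> 0" and d: "d > 0" and inf: "\<bar>\<alpha>\<bar> = \<infinity>" and w: "w \<in> ext_roots c d \<alpha> \<beta>"
  shows "cmod w \<le> c + d + 1"
proof -
  obtain a ws where tends: "((\<lambda>k. ereal (a k)) \<longlongrightarrow> \<alpha>) sequentially"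
    and roots: "\<forall>k. pol c d (a k) \<beta> (ws k) = 0" and lim: "ws \<longlonglongrightarrow> w"
    using w inf unfolding ext_roots_def by auto
  have at: "filterlim (\<lambda>k. \<bar>a k\<bar>) at_top sequentially" by (rule abs_at_top[OF inf tends])
  have "((\<lambda>k. inverse \<bar>a k\<bar>) \<longlongrightarrow> 0) sequentially" by (rule tendsto_inverse_0_at_top[OF at])
  hence "((\<lambda>k. norm (inverse (complex_of_real (a k)))) \<longlongrightarrow> 0) sequentially"
    by (simp add: norm_inverse)
  hence inv0: "((\<lambda>k. inverse (complex_of_real (a k))) \<longlongrightarrow> 0) sequentially"
    by (rule tendsto_norm_zero_cancel)
  have ev: "eventually (\<lambda>k. a k \<noteq> 0) sequentially"
    using at unfolding filterlim_at_top_dense by (auto elim: eventually_mono allE[where x=0])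
  have qlim: "((\<lambda>k. qq c d (ws k)) \<longlongrightarrow> qq c d w) sequentially"
    unfolding qq_def by (intro tendsto_intros lim)
  have "((\<lambda>k. ((ws k)^2 * (qq c d (ws k) + complex_of_real \<beta>)) * inverse (complex_of_real (a k)))
        \<longlongrightarrow> ((w^2 * (qq c d w + complex_of_real \<beta>)) * 0)) sequentially"
    by (intro tendsto_intros lim qlim inv0)
  hence l2: "((\<lambda>k. ((ws k)^2 * (qq c d (ws k) + complex_of_real \<beta>)) * inverse (complex_of_real (a k)))
        \<longlongrightarrow> 0) sequentially" by simp
  have "eventually (\<lambda>k. ((ws k)^2 * (qq c d (ws k) + complex_of_real \<beta>)) * inverse (complex_of_real (a k))
        = qq c d (ws k)) sequentially"
    using ev
  proof (rule eventually_mono)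
    fix k assume ak: "a k \<noteq> 0"
    have "pol c d (a k) \<beta> (ws k) = (complex_of_real (a k) - (ws k)^2) * qq c d (ws k) - complex_of_real \<beta> * (ws k)^2"
      unfolding pol_def qq_def ..
    hence "complex_of_real (a k) * qq c d (ws k) = (ws k)^2 * (qq c d (ws k) + complex_of_real \<beta>)"
      using roots by (simp add: algebra_simps)
    thus "((ws k)^2 * (qq c d (ws k) + complex_of_real \<beta>)) * inverse (complex_of_real (a k)) = qq c d (ws k)"
      using ak by (metis mult.commute nonzero_mult_div_cancel_left of_real_eq_0_iff divide_inverse)
  qed
  hence "((\<lambda>k. qq c d (ws k)) \<longlongrightarrow> 0) sequentially" by (rule Lim_transform_eventually[OF l2])
  hence "qq c d w = 0" using qlim LIMSEQ_unique by blast
  thus ?thesis by (rule qq_zero_bound[OF c d])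
qed



lemma eqdiv: "(D::real) \<noteq> 0 \<Longrightarrow> b * D = X \<Longrightarrow> b = X / D" by (simp add: eq_divide_eq)

lemma aux_ident:
  fixes X D N d y :: real
  shows "X \<noteq> 0 \<Longrightarrow> D \<noteq> 0 \<Longrightarrow> d \<noteq> 0 \<Longrightarrow> -2*y*N/D = (d*(N/X^2)/(D/X))*(-2*y*X/d)"
  by (simp add: field_simps power2_eq_square)

lemma h_ident:
  fixes x y c d :: real
  assumes x: "x \<noteq> 0" and D: "d*(x^2+y^2) + 2*c*y \<noteq> 0" and d: "d \<noteq> 0"
  shows "-2*y*((- (x^2) + y^2 + d*y + c)^2 + x^2*(2*y+d)^2) / (d*(x^2+y^2) + 2*c*y)
    = (d*((-1 + (y^2+d*y+c)*(1/x^2))^2 + (2*y+d)^2*(1/x^2)) / (d + (d*y^2+2*c*y)*(1/x^2))) * (-2*y*x^2/d)"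
proof -
  have x2: "x^2 \<noteq> 0" using x by simp
  have e1: "d + (d*y^2+2*c*y)*(1/x^2) = (d*(x^2+y^2) + 2*c*y)/x^2"
    using x2 by (simp add: field_simps)
  have e2: "(-1 + (y^2+d*y+c)*(1/x^2))^2 + (2*y+d)^2*(1/x^2)
     = ((- (x^2) + y^2 + d*y + c)^2 + x^2*(2*y+d)^2) / (x^2)^2"
    using x2 by (simp add: field_simps power2_eq_square)
  show ?thesis unfolding e1 e2 by (rule aux_ident[OF x2 D d])
qed
theorem corollary2p7:
  fixes c d :: real and WA WB :: "real set"
  assumes c: "c \<ge> 0" and d: "d > 0"
    and WA: "WA \<noteq> {}" "is_interval WA"
    and WB: "WB \<noteq> {}" "is_interval WB" "bounded WB" "WB \<noteq> {0}"
  shows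
    "(\<exists>R. \<forall>\<omega>. Re \<omega> \<noteq> 0 \<and> \<bar>Im \<omega>\<bar> > R \<longrightarrow> \<omega> \<notin> W_Omega c d (Omega WA WB))
     \<and> (\<forall>w :: nat \<Rightarrow> complex.
          (\<forall>n. w n \<in> W_Omega c d (Omega WA WB)) \<and>
          filterlim (\<lambda>n. \<bar>Re (w n)\<bar>) at_top sequentially \<longrightarrow>
            (\<lambda>n. beta_hat c d (w n)) \<sim>[sequentially] (\<lambda>n. - 2 * Im (w n) * (Re (w n))^2 / d)
            \<and> (\<lambda>n. Im (w n)) \<in> O[sequentially](\<lambda>n. 1 / (Re (w n))^2))
     \<and> (\<forall>\<omega>. Re \<omega> \<noteq> 0 \<and> \<omega> \<notin> circD c d \<longrightarrow>
          (beta_hat c d \<omega> \<ge> 0 \<longleftrightarrow> \<omega> \<in> Pi_beta c d))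
     \<and> (\<forall>\<omega>. Re \<omega> \<noteq> 0 \<and> \<omega> \<notin> circD c d \<longrightarrow>
          (alpha_hat c d \<omega> \<ge> 0 \<longleftrightarrow> \<omega> \<in> Pi_alpha c d))"
proof -
  define K where "K = 2*d + 2*c + 1 + 2*c/d"
  have cd0: "2*c/d \<ge> 0" using c d by simp
  have K1: "K > c + d + 1" unfolding K_def using cd0 d c by linarith
  have K0: "K \<ge> 1" using K1 c d by linarith
  have dc: "d + 2*c > 0" using c d by simp
  obtain M where M: "\<forall>b\<in>closure WB. \<bar>b\<bar> \<le> M"
    using bounded_closure[OF WB(3)] unfolding bounded_iff real_norm_def by auto
  obtain b0 where "b0 \<in> WB" using WB(1) by auto
  hence "b0 \<in> closure WB" using closure_subset by auto
  hence M0: "M \<ge> 0" using M by force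
  have key: "\<bar>beta_hat c d w\<bar> \<le> M"
    if w: "w \<in> W_Omega c d (Omega WA WB)" "cmod w \<ge> K" "Re w \<noteq> 0" for w
  proof -
    from w(1) obtain \<alpha> \<beta> where ab: "\<beta> \<in> closure WB" "w \<in> ext_roots c d \<alpha> \<beta>"
      unfolding W_Omega_def Omega_def by auto
    show ?thesis
    proof (cases "\<bar>\<alpha>\<bar> = \<infinity>")
      case True
      have "cmod w \<le> c + d + 1" by (rule inf_root_bound[OF c d True ab(2)])
      thus ?thesis using w(2) K1 by linarith
    next
      case False
      hence "pol c d (real_of_ereal \<alpha>) \<beta> w = 0" using ab(2) unfolding ext_roots_def by simp
      from pol_beta[OF this w(3)] have eq:
        "\<beta> * (d*((Re w)^2+(Im w)^2) + 2*c*Im w) = -2*Im w*((- ((Re w)^2) + (Im w)^2 + d*Im w + c)^2 + (Re w)^2*(2*Im w+d)^2)" .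
      have Dp: "d*((Re w)^2+(Im w)^2) + 2*c*Im w > 0"
        using big_bound(1)[OF c d] w(2) unfolding K_def by blast
      have "\<beta> = (-2*Im w*((- ((Re w)^2) + (Im w)^2 + d*Im w + c)^2 + (Re w)^2*(2*Im w+d)^2)) / (d*((Re w)^2+(Im w)^2) + 2*c*Im w)"
        by (rule eqdiv[OF _ eq]) (use Dp in simp)
      also have "\<dots> = beta_hat c d w" unfolding beta_hat_def cmod_power2 by simp
      finally have "\<beta> = beta_hat c d w" .
      thus ?thesis using M ab(1) by auto
    qed
  qed
  have lowb: "\<bar>Im w\<bar> * (cmod w)^2 / (2*(d+2*c)) \<le> M"
    if w: "w \<in> W_Omega c d (Omega WA WB)" "cmod w \<ge> K" "Re w \<noteq> 0" for w
    using big_bound(2)[OF c d, of w] w(2) key[OF w] unfolding K_def by linarith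
  have P1: "\<exists>R. \<forall>\<omega>. Re \<omega> \<noteq> 0 \<and> \<bar>Im \<omega>\<bar> > R \<longrightarrow> \<omega> \<notin> W_Omega c d (Omega WA WB)"
  proof (intro exI allI impI notI)
    fix \<omega> assume a: "Re \<omega> \<noteq> 0 \<and> \<bar>Im \<omega>\<bar> > K + 2*(d+2*c)*(M+1)"
      and inW: "\<omega> \<in> W_Omega c d (Omega WA WB)"
    have pos: "2*(d+2*c)*(M+1) \<ge> 0" using dc M0 by simp
    have y: "\<bar>Im \<omega>\<bar> > 2*(d+2*c)*(M+1)" "\<bar>Im \<omega>\<bar> > K" using a K0 pos by linarith+
    have r: "cmod \<omega> \<ge> K" using abs_Im_le_cmod[of \<omega>] y(2) by linarith
    have r1: "(cmod \<omega>)^2 \<ge> 1" using r K0 by (simp add: one_le_power)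
    have "\<bar>Im \<omega>\<bar> * 1 \<le> \<bar>Im \<omega>\<bar> * (cmod \<omega>)^2" by (rule mult_left_mono[OF r1]) simp
    hence "\<bar>Im \<omega>\<bar> / (2*(d+2*c)) \<le> \<bar>Im \<omega>\<bar> * (cmod \<omega>)^2 / (2*(d+2*c))"
      using dc by (simp add: divide_right_mono)
    moreover have "\<bar>Im \<omega>\<bar> / (2*(d+2*c)) > M + 1" using y(1) dc by (simp add: pos_less_divide_eq mult.commute)
    ultimately show False using lowb[OF inW r] a by linarith
  qed
  have P2: "(\<forall>w :: nat \<Rightarrow> complex.
          (\<forall>n. w n \<in> W_Omega c d (Omega WA WB)) \<and>
          filterlim (\<lambda>n. \<bar>Re (w n)\<bar>) at_top sequentially \<longrightarrow>
            (\<lambda>n. beta_hat c d (w n)) \<sim>[sequentially] (\<lambda>n. - 2 * Im (w n) * (Re (w n))^2 / d)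
            \<and> (\<lambda>n. Im (w n)) \<in> O[sequentially](\<lambda>n. 1 / (Re (w n))^2))"
  proof (intro allI impI)
    fix w :: "nat \<Rightarrow> complex"
    assume a: "(\<forall>n. w n \<in> W_Omega c d (Omega WA WB)) \<and> filterlim (\<lambda>n. \<bar>Re (w n)\<bar>) at_top sequentially"
    define C where "C = 2*(d+2*c)*M"
    have evK: "eventually (\<lambda>n. K < \<bar>Re (w n)\<bar>) sequentially"
      using a unfolding filterlim_at_top_dense by blast
    have ev: "eventually (\<lambda>n. \<bar>Im (w n)\<bar> \<le> C * \<bar>1 / (Re (w n))^2\<bar> \<and> Re (w n) \<noteq> 0
                 \<and> d*((Re (w n))^2+(Im (w n))^2) + 2*c*Im (w n) > 0) sequentially"
      using evK
    proof (rule eventually_mono)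
      fix n assume n: "K < \<bar>Re (w n)\<bar>"
      define x y where "x = Re (w n)" "y = Im (w n)"
      have r: "cmod (w n) \<ge> K" using abs_Re_le_cmod[of "w n"] n by linarith
      have x0: "x \<noteq> 0" using n K0 x_y_def by auto
      have Dp: "d*((Re (w n))^2+(Im (w n))^2) + 2*c*Im (w n) > 0"
        using big_bound(1)[OF c d] r unfolding K_def by blast
      have lb: "\<bar>y\<bar> * (cmod (w n))^2 / (2*(d+2*c)) \<le> M" using lowb[OF _ r] a x0 x_y_def by auto
      have "x^2 \<le> (cmod (w n))^2" unfolding cmod_power2 x_y_def by simp
      hence "\<bar>y\<bar> * x^2 \<le> \<bar>y\<bar> * (cmod (w n))^2" by (rule mult_left_mono) simp
      hence "\<bar>y\<bar> * x^2 / (2*(d+2*c)) \<le> M" using lb dc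
        by (meson divide_right_mono less_imp_le order_trans zero_le_mult_iff zero_less_numeral)
      hence "\<bar>y\<bar> * x^2 \<le> C" unfolding C_def using dc by (simp add: divide_le_eq mult.commute)
      hence "\<bar>y\<bar> \<le> C / x^2" using x0 by (simp add: le_divide_eq)
      hence "\<bar>y\<bar> \<le> C * \<bar>1 / x^2\<bar>" by simp
      thus "\<bar>Im (w n)\<bar> \<le> C * \<bar>1 / (Re (w n))^2\<bar> \<and> Re (w n) \<noteq> 0
                 \<and> d*((Re (w n))^2+(Im (w n))^2) + 2*c*Im (w n) > 0" using x0 Dp x_y_def by simp
    qed
    have bigO: "(\<lambda>n. Im (w n)) \<in> O[sequentially](\<lambda>n. 1 / (Re (w n))^2)"
      by (rule bigoI[where c = C]) (use ev in \<open>auto elim: eventually_mono\<close>)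
    define u where "u n = 1 / (Re (w n))^2" for n
    have "((\<lambda>n. inverse \<bar>Re (w n)\<bar>) \<longlongrightarrow> 0) sequentially"
      using a by (intro tendsto_inverse_0_at_top) auto
    hence "((\<lambda>n. (inverse \<bar>Re (w n)\<bar>)^2) \<longlongrightarrow> 0) sequentially"
      using tendsto_power[of _ 0 sequentially 2] by simp
    moreover have "(inverse \<bar>Re (w n)\<bar>)^2 = u n" for n
      unfolding u_def by (simp add: inverse_eq_divide power_divide)
    ultimately have u0: "(u \<longlongrightarrow> 0) sequentially" by simp
    have "((\<lambda>n. C * u n) \<longlongrightarrow> C * 0) sequentially" by (intro tendsto_intros u0)
    hence g0: "((\<lambda>n. C * u n) \<longlongrightarrow> 0) sequentially" by simp
    have evn: "eventually (\<lambda>n. norm (Im (w n)) \<le> C * u n) sequentially"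
      using ev
    proof (rule eventually_mono)
      fix n assume "\<bar>Im (w n)\<bar> \<le> C * \<bar>1 / (Re (w n))^2\<bar> \<and> Re (w n) \<noteq> 0
                 \<and> d*((Re (w n))^2+(Im (w n))^2) + 2*c*Im (w n) > 0"
      hence "\<bar>Im (w n)\<bar> \<le> C * \<bar>1 / (Re (w n))^2\<bar>" by blast
      moreover have "\<bar>1 / (Re (w n))^2\<bar> = u n" unfolding u_def by simp
      ultimately show "norm (Im (w n)) \<le> C * u n" unfolding real_norm_def by metis
    qed
    have "((\<lambda>n. Im (w n)) \<longlongrightarrow> 0) sequentially"
      by (rule Lim_null_comparison[OF evn g0])
    note y0 = this
    define h where "h n = d*((-1 + ((Im (w n))^2+d*Im (w n)+c)*u n)^2 + (2*Im (w n)+d)^2*u n)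
                          / (d + (d*(Im (w n))^2+2*c*Im (w n))*u n)" for n
    have "(h \<longlongrightarrow> d*((-1 + (0^2+d*0+c)*0)^2 + (2*0+d)^2*0) / (d + (d*0^2+2*c*0)*0)) sequentially"
      unfolding h_def using d by (intro tendsto_intros y0 u0) auto
    hence h1: "(h \<longlongrightarrow> 1) sequentially" using d by simp
    have "h \<sim>[sequentially] (\<lambda>_. 1)" by (rule tendsto_imp_asymp_equiv_const[OF h1]) simp
    hence "(\<lambda>n. h n * (- 2 * Im (w n) * (Re (w n))^2 / d)) \<sim>[sequentially]
           (\<lambda>n. 1 * (- 2 * Im (w n) * (Re (w n))^2 / d))"
      by (intro asymp_equiv_mult asymp_equiv_refl)
    moreover have "eventually (\<lambda>n. h n * (- 2 * Im (w n) * (Re (w n))^2 / d) = beta_hat c d (w n)) sequentially"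
      using ev
    proof (rule eventually_mono)
      fix n assume n: "\<bar>Im (w n)\<bar> \<le> C * \<bar>1 / (Re (w n))^2\<bar> \<and> Re (w n) \<noteq> 0
                 \<and> d*((Re (w n))^2+(Im (w n))^2) + 2*c*Im (w n) > 0"
      have "beta_hat c d (w n) = -2*Im (w n)*((- ((Re (w n))^2) + (Im (w n))^2 + d*Im (w n) + c)^2 + (Re (w n))^2*(2*Im (w n)+d)^2)
         / (d*((Re (w n))^2+(Im (w n))^2) + 2*c*Im (w n))"
        unfolding beta_hat_def cmod_power2 by simp
      also have "\<dots> = h n * (- 2 * Im (w n) * (Re (w n))^2 / d)"
      proof -
        have n1: "Re (w n) \<noteq> 0" and n2: "d*((Re (w n))^2+(Im (w n))^2) + 2*c*Im (w n) \<noteq> 0"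
          using n by auto
        show ?thesis unfolding h_def u_def by (rule h_ident[OF n1 n2]) (use d in simp)
      qed
      finally show "h n * (- 2 * Im (w n) * (Re (w n))^2 / d) = beta_hat c d (w n)" by simp
    qed
    ultimately have "(\<lambda>n. beta_hat c d (w n)) \<sim>[sequentially] (\<lambda>n. - 2 * Im (w n) * (Re (w n))^2 / d)"
      by (rule asymp_equiv_transfer) simp
    thus "(\<lambda>n. beta_hat c d (w n)) \<sim>[sequentially] (\<lambda>n. - 2 * Im (w n) * (Re (w n))^2 / d)
            \<and> (\<lambda>n. Im (w n)) \<in> O[sequentially](\<lambda>n. 1 / (Re (w n))^2)" using bigO by simp
  qed
  show ?thesis using P1 P2 part3[OF c d] part4[OF c d] by blast
qed


end
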